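(* Let $n\ge 3$. Consider the two-graph Moran process on $n$ vertices in which the resident graph $G_R$ is the clique $K_n$ and the mutant graph $G_M$ is the undirected star $K_{1,n-1}$. For every $r>0$, the fixation probability satisfies $$f_{G_R,G_M}(r)\le \frac{r^{n-1}}{(n-2)!}.$$
   Context: Two-graph Moran process: vertex set $V=\{1,\dots,n\}$; resident graph $G_R=(V,E_R)$ and mutant graph $G_M=(V,E_M)$, strongly connected, with row-stochastic weight matrices $W_R=[w^R_{ij}]$, $W_M=[w^M_{ij}]$ ($w^R_{ij}>0$ iff $(i,j)\in E_R$, similarly for $M$). The state is the mutant set $S$; residents have fitness $1$, mutants fitness $r>0$. Each step a vertex $i$ is chosen with probability proportional to fitness; if $i$ is a mutant, it picks $j$ with probability $w^M_{ij}$ and $j$ becomes a mutant; if a resident, it picks $j$ with probability $w^R_{ij}$ and $j$ becomes a resident. Absorption at $S=\emptyset$ or $S=V$ (fixation). The fixation probability $f_{G_R,G_M}(r)$ is the probability of fixation when starting with one mutant at a uniformly random vertex. Undirected graphs are unweighted: $w_{ij}=1/\deg(i)$ for each neighbour $j$ of $i$. *)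

theory Defs
  imports Complex_Main
begin

text \<open>Two-graph Moran process on the vertex set {0..<n} (the paper's {1,...,n},
shifted by one). Weight matrices are functions nat => nat => real.
A state is the set S of mutant vertices.\<close>

definition fitness :: "real \<Rightarrow> nat set \<Rightarrow> nat \<Rightarrow> real" where
  "fitness r S i = (if i \<in> S then r else 1)"

definition moran_update :: "nat set \<Rightarrow> nat \<Rightarrow> nat \<Rightarrow> nat set" where
  "moran_update S i j = (if i \<in> S then insert j S else S - {j})"

definition moran_step ::
  "nat \<Rightarrow> real \<Rightarrow> (nat \<Rightarrow> nat \<Rightarrow> real) \<Rightarrow> (nat \<Rightarrow> nat \<Rightarrow> real) \<Rightarrow> nat set \<Rightarrow> nat set \<Rightarrow> real" where
  "moran_step n r WR WM S T =
     (\<Sum>i<n. \<Sum>j<n. (fitness r S i / (\<Sum>k<n. fitness r S k))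
        * (if i \<in> S then WM i j else WR i j)
        * (if moran_update S i j = T then 1 else 0))"

primrec moran_tprob ::
  "nat \<Rightarrow> real \<Rightarrow> (nat \<Rightarrow> nat \<Rightarrow> real) \<Rightarrow> (nat \<Rightarrow> nat \<Rightarrow> real) \<Rightarrow> nat \<Rightarrow> nat set \<Rightarrow> nat set \<Rightarrow> real" where
  "moran_tprob n r WR WM 0 S T = (if S = T then 1 else 0)"
| "moran_tprob n r WR WM (Suc t) S T =
     (\<Sum>U\<in>Pow {..<n}. moran_step n r WR WM S U * moran_tprob n r WR WM t U T)"

definition fixation_from ::
  "nat \<Rightarrow> real \<Rightarrow> (nat \<Rightarrow> nat \<Rightarrow> real) \<Rightarrow> (nat \<Rightarrow> nat \<Rightarrow> real) \<Rightarrow> nat set \<Rightarrow> real" where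
  "fixation_from n r WR WM S = lim (\<lambda>t. moran_tprob n r WR WM t S {..<n})"

definition fixation_prob ::
  "nat \<Rightarrow> real \<Rightarrow> (nat \<Rightarrow> nat \<Rightarrow> real) \<Rightarrow> (nat \<Rightarrow> nat \<Rightarrow> real) \<Rightarrow> real" where
  "fixation_prob n r WR WM = (\<Sum>v<n. fixation_from n r WR WM {v}) / real n"

definition clique_W :: "nat \<Rightarrow> nat \<Rightarrow> nat \<Rightarrow> real" where
  "clique_W n i j = (if i \<noteq> j then 1 / (real n - 1) else 0)"

definition star_W :: "nat \<Rightarrow> nat \<Rightarrow> nat \<Rightarrow> real" where
  "star_W n i j =
     (if i = 0 then (if j \<noteq> 0 then 1 / (real n - 1) else 0)
      else (if j = 0 then 1 else 0))"

end

theory Submission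
  imports Defs
begin


lemma upd_sub: "S \<subseteq> {..<n} \<Longrightarrow> j < n \<Longrightarrow> moran_update S i j \<subseteq> {..<n}"
  by (auto simp: moran_update_def)

lemma step_exchange:
  assumes "S \<subseteq> {..<n}"
  shows "(\<Sum>U\<in>Pow {..<n}. moran_step n r WR WM S U * g U) =
    (\<Sum>i<n. \<Sum>j<n. (fitness r S i / (\<Sum>k<n. fitness r S k)) * (if i\<in>S then WM i j else WR i j) * g (moran_update S i j))"
proof -
  have "(\<Sum>U\<in>Pow {..<n}. moran_step n r WR WM S U * g U) =
    (\<Sum>U\<in>Pow {..<n}. \<Sum>i<n. \<Sum>j<n. (fitness r S i / (\<Sum>k<n. fitness r S k)) * (if i\<in>S then WM i j else WR i j) * (if moran_update S i j = U then g U else 0))"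
    unfolding moran_step_def sum_distrib_right
    by (intro sum.cong refl) (auto simp: mult_ac)
  also have "\<dots> = (\<Sum>i<n. \<Sum>j<n. \<Sum>U\<in>Pow {..<n}. (fitness r S i / (\<Sum>k<n. fitness r S k)) * (if i\<in>S then WM i j else WR i j) * (if moran_update S i j = U then g U else 0))"
    by (subst sum.swap) (simp add: sum.swap[of _ "Pow {..<n}"])
  also have "\<dots> = (\<Sum>i<n. \<Sum>j<n. (fitness r S i / (\<Sum>k<n. fitness r S k)) * (if i\<in>S then WM i j else WR i j) * g (moran_update S i j))"
    apply (intro sum.cong refl)
    apply (subst sum_distrib_left[symmetric])
    apply (subst sum.delta')
    using upd_sub[OF assms] by auto
  finally show ?thesis .
qed



definition ph :: "(bool \<Rightarrow> nat \<Rightarrow> real) \<Rightarrow> nat set \<Rightarrow> real" where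
  "ph \<Phi> S = \<Phi> (0 \<in> S) (card (S - {0}))"

lemma sum_except:
  assumes "finite A" "a \<in> A"
  shows "(\<Sum>j\<in>A. (if j \<noteq> a then c else 0)) = (real (card A) - 1) * (c::real)"
proof -
  have "0 < card A" using assms card_gt_0_iff by blast
  then have c1: "card A \<ge> 1" by simp
  have "(\<Sum>j\<in>A. (if j \<noteq> a then c else 0)) = (if a \<noteq> a then c else 0) + (\<Sum>j\<in>A-{a}. (if j \<noteq> a then c else 0))"
    using assms by (rule sum.remove)
  also have "\<dots> = (\<Sum>j\<in>A-{a}. c)" by (auto intro!: sum.cong)
  also have "\<dots> = real (card A - 1) * c" using assms by simp
  also have "real (card A - 1) = real (card A) - 1" using c1 by (simp add: of_nat_diff)
  finally show ?thesis .
qed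

lemma alg1: "1 / (m::real) * z + x * (1 / m * y) = (z + x * y) / m"
  by (cases "m = 0") (auto simp: field_simps)

lemma alg2: "x * (1 / (m::real) * y) + z * (1 / m * w) = (x * y + z * w) / m"
  by (simp add: add_divide_distrib)

lemma E0:
  assumes S: "S \<subseteq> {..<n}" and c: "0 \<in> S"
  shows "(\<Sum>j<n. star_W n 0 j * ph \<Phi> (insert j S)) =
     (real (card (S - {0})) * \<Phi> True (card (S-{0})) + (real n - 1 - real (card (S-{0}))) * \<Phi> True (Suc (card (S-{0})))) / (real n - 1)"
proof -
  let ?k = "card (S - {0})"
  have fS: "finite S" using S finite_subset by blast
  have cardS: "card S = Suc ?k" using card_Suc_Diff1[OF fS c] by simp
  have "(\<Sum>j<n. star_W n 0 j * ph \<Phi> (insert j S)) = (\<Sum>j\<in>S. star_W n 0 j * ph \<Phi> (insert j S)) + (\<Sum>j\<in>{..<n}-S. star_W n 0 j * ph \<Phi> (insert j S))"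
    using S by (simp add: sum.subset_diff)
  also have "(\<Sum>j\<in>S. star_W n 0 j * ph \<Phi> (insert j S)) = star_W n 0 0 * ph \<Phi> (insert 0 S) + (\<Sum>j\<in>S-{0}. star_W n 0 j * ph \<Phi> (insert j S))"
    by (rule sum.remove[OF fS c])
  also have "(\<Sum>j\<in>S-{0}. star_W n 0 j * ph \<Phi> (insert j S)) = (\<Sum>j\<in>S-{0}. 1 / (real n - 1) * \<Phi> True ?k)"
    by (intro sum.cong refl) (auto simp: star_W_def ph_def insert_absorb c)
  also have "(\<Sum>j\<in>{..<n}-S. star_W n 0 j * ph \<Phi> (insert j S)) = (\<Sum>j\<in>{..<n}-S. 1 / (real n - 1) * \<Phi> True (Suc ?k))"
  proof (intro sum.cong refl)
    fix j assume j: "j \<in> {..<n} - S"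
    have "insert j S - {0} = insert j (S - {0})" using j c by auto
    then have "card (insert j S - {0}) = Suc ?k" using j fS by simp
    then show "star_W n 0 j * ph \<Phi> (insert j S) = 1 / (real n - 1) * \<Phi> True (Suc ?k)"
      using j c by (auto simp: star_W_def ph_def)
  qed
  finally have eq: "(\<Sum>j<n. star_W n 0 j * ph \<Phi> (insert j S)) = star_W n 0 0 * ph \<Phi> (insert 0 S) + (\<Sum>j\<in>S-{0}. 1 / (real n - 1) * \<Phi> True ?k) + (\<Sum>j\<in>{..<n}-S. 1 / (real n - 1) * \<Phi> True (Suc ?k))" .
  have "card ({..<n} - S) = n - Suc ?k" using S fS cardS by (simp add: card_Diff_subset)
  moreover have "Suc ?k \<le> n" using S cardS by (metis card_lessThan card_mono finite_lessThan)
  ultimately have "real (card ({..<n} - S)) = real n - 1 - real ?k" by (simp add: of_nat_diff)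
  moreover have "real (card (S - {0})) = real ?k" by simp
  ultimately have c2: "(\<Sum>j\<in>{..<n}-S. 1 / (real n - 1) * \<Phi> True (Suc ?k)) = (real n - 1 - real ?k) * (1 / (real n - 1) * \<Phi> True (Suc ?k))"
    by (simp only: sum_constant)
  have c1: "(\<Sum>j\<in>S-{0}. 1 / (real n - 1) * \<Phi> True ?k) = real ?k * (1 / (real n - 1) * \<Phi> True ?k)"
    by (simp only: sum_constant)
  have c0: "star_W n 0 0 = 0" by (simp add: star_W_def)
  show ?thesis unfolding eq c0 c1 c2 by (simp only: mult_zero_left add_0 alg2)
qed

lemma Eleaf:
  assumes "i \<noteq> 0" "0 < n"
  shows "(\<Sum>j<n. star_W n i j * ph \<Phi> (insert j S)) = \<Phi> True (card (S - {0}))"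
proof -
  have "(\<Sum>j<n. star_W n i j * ph \<Phi> (insert j S)) = (\<Sum>j<n. if j = 0 then ph \<Phi> (insert 0 S) else 0)"
    using assms by (intro sum.cong refl) (auto simp: star_W_def)
  also have "\<dots> = ph \<Phi> (insert 0 S)" using assms by (simp add: sum.delta)
  also have "\<dots> = \<Phi> True (card (S - {0}))" by (simp add: ph_def)
  finally show ?thesis .
qed

lemma Eres:
  assumes S: "S \<subseteq> {..<n}" and i: "i < n" "i \<notin> S"
  shows "(\<Sum>j<n. clique_W n i j * ph \<Phi> (S - {j})) =
     ((if 0 \<in> S then \<Phi> False (card (S-{0})) else 0) + real (card (S-{0})) * \<Phi> (0 \<in> S) (card (S-{0}) - 1)
      + (real n - real (card S) - 1) * ph \<Phi> S) / (real n - 1)"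
proof -
  let ?k = "card (S - {0})"
  have fS: "finite S" using S finite_subset by blast
  have "(\<Sum>j<n. clique_W n i j * ph \<Phi> (S - {j})) = (\<Sum>j\<in>S. clique_W n i j * ph \<Phi> (S - {j})) + (\<Sum>j\<in>{..<n}-S. clique_W n i j * ph \<Phi> (S - {j}))"
    using S by (simp add: sum.subset_diff)
  also have "(\<Sum>j\<in>{..<n}-S. clique_W n i j * ph \<Phi> (S - {j})) = (\<Sum>j\<in>{..<n}-S. if j \<noteq> i then 1 / (real n - 1) * ph \<Phi> S else 0)"
    by (intro sum.cong refl) (auto simp: clique_W_def)
  also have "\<dots> = (real (card ({..<n}-S)) - 1) * (1 / (real n - 1) * ph \<Phi> S)"
    using i by (intro sum_except) auto
  also have "real (card ({..<n}-S)) = real n - real (card S)" using S fS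
    card_mono[OF _ S] by (simp add: card_Diff_subset of_nat_diff)
  also have "(\<Sum>j\<in>S. clique_W n i j * ph \<Phi> (S - {j})) = (\<Sum>j\<in>S. 1 / (real n - 1) * ph \<Phi> (S - {j}))"
    using i by (intro sum.cong refl) (auto simp: clique_W_def)
  also have "(\<Sum>j\<in>S. 1 / (real n - 1) * ph \<Phi> (S - {j})) = 1 / (real n - 1) * (\<Sum>j\<in>S. ph \<Phi> (S - {j}))"
    by (simp add: sum_distrib_left)
  also have "(\<Sum>j\<in>S. ph \<Phi> (S - {j})) = (if 0 \<in> S then \<Phi> False ?k else 0) + real ?k * \<Phi> (0 \<in> S) (?k - 1)"
  proof -
    have "(\<Sum>j\<in>S. ph \<Phi> (S - {j})) = (\<Sum>j\<in>S. if j = 0 then ph \<Phi> (S - {0}) else 0) + (\<Sum>j\<in>S. if j \<noteq> 0 then ph \<Phi> (S - {j}) else 0)"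
      by (subst sum.distrib[symmetric]) (auto intro!: sum.cong)
    also have "(\<Sum>j\<in>S. if j = 0 then ph \<Phi> (S - {0}) else 0) = (if 0 \<in> S then \<Phi> False ?k else 0)"
      using fS by (simp add: sum.delta ph_def)
    also have "(\<Sum>j\<in>S. if j \<noteq> 0 then ph \<Phi> (S - {j}) else 0) = (\<Sum>j\<in>S-{0}. ph \<Phi> (S - {j}))"
    proof -
      have "(\<Sum>j\<in>S. if j \<noteq> 0 then ph \<Phi> (S - {j}) else 0) = (\<Sum>j\<in>{j\<in>S. j \<noteq> 0}. ph \<Phi> (S - {j}))"
        using fS by (rule sum.inter_filter[symmetric])
      also have "{j\<in>S. j \<noteq> 0} = S - {0}" by auto
      finally show ?thesis .
    qed
    also have "\<dots> = (\<Sum>j\<in>S-{0}. \<Phi> (0 \<in> S) (?k - 1))"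
    proof (intro sum.cong refl)
      fix j assume j: "j \<in> S - {0}"
      have "S - {j} - {0} = (S - {0}) - {j}" by auto
      then have "card (S - {j} - {0}) = ?k - 1" using j fS by simp
      then show "ph \<Phi> (S - {j}) = \<Phi> (0 \<in> S) (?k - 1)" using j by (simp add: ph_def)
    qed
    also have "\<dots> = real ?k * \<Phi> (0 \<in> S) (?k - 1)" by simp
    finally show ?thesis .
  qed
  also have "1 / (real n - 1) * ((if 0 \<in> S then \<Phi> False ?k else 0) + real ?k * \<Phi> (0 \<in> S) (?k - 1))
     + (real n - real (card S) - 1) * (1 / (real n - 1) * ph \<Phi> S) =
     ((if 0 \<in> S then \<Phi> False ?k else 0) + real ?k * \<Phi> (0 \<in> S) (?k - 1)
      + (real n - real (card S) - 1) * ph \<Phi> S) / (real n - 1)"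
    by (rule alg1)
  finally show ?thesis .
qed



lemma drift:
  fixes \<Phi> :: "bool \<Rightarrow> nat \<Rightarrow> real"
  assumes S: "S \<subseteq> {..<n}" and n: "n \<ge> 2"
  defines "k \<equiv> card (S - {0})"
  defines "ER \<equiv> ((if 0 \<in> S then \<Phi> False k else 0) + real k * \<Phi> (0 \<in> S) (k - 1)
      + (real n - real (card S) - 1) * ph \<Phi> S) / (real n - 1)"
  defines "E0v \<equiv> (real k * \<Phi> True k + (real n - 1 - real k) * \<Phi> True (Suc k)) / (real n - 1)"
  shows "(\<Sum>U\<in>Pow {..<n}. moran_step n r (clique_W n) (star_W n) S U * ph \<Phi> U) =
     ((if 0 \<in> S then r * E0v else 0) + r * real k * \<Phi> True k + (real n - real (card S)) * ER)
      / (\<Sum>k<n. fitness r S k)"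
proof -
  let ?F = "\<Sum>k<n. fitness r S k"
  have fS: "finite S" using S finite_subset by blast
  define E where "E i = (\<Sum>j<n. (if i\<in>S then star_W n i j else clique_W n i j) * ph \<Phi> (moran_update S i j))" for i
  have "(\<Sum>U\<in>Pow {..<n}. moran_step n r (clique_W n) (star_W n) S U * ph \<Phi> U) =
     (\<Sum>i<n. \<Sum>j<n. (fitness r S i / ?F) * (if i\<in>S then star_W n i j else clique_W n i j) * ph \<Phi> (moran_update S i j))"
    by (rule step_exchange[OF S])
  also have "\<dots> = (\<Sum>i<n. fitness r S i * E i) / ?F"
    unfolding E_def sum_divide_distrib sum_distrib_left
    by (intro sum.cong refl) (simp add: mult_ac)
  also have "(\<Sum>i<n. fitness r S i * E i) = (\<Sum>i\<in>S. fitness r S i * E i) + (\<Sum>i\<in>{..<n}-S. fitness r S i * E i)"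
    using S by (simp add: sum.subset_diff)
  also have "(\<Sum>i\<in>{..<n}-S. fitness r S i * E i) = (\<Sum>i\<in>{..<n}-S. ER)"
  proof (intro sum.cong refl)
    fix i assume i: "i \<in> {..<n} - S"
    have "E i = (\<Sum>j<n. clique_W n i j * ph \<Phi> (S - {j}))"
      unfolding E_def using i by (intro sum.cong refl) (auto simp: moran_update_def)
    also have "\<dots> = ER" unfolding ER_def k_def using i S by (intro Eres) auto
    finally show "fitness r S i * E i = ER" using i by (simp add: fitness_def)
  qed
  also have "(\<Sum>i\<in>{..<n}-S. ER) = (real n - real (card S)) * ER"
    using S fS card_mono[OF _ S] by (simp add: card_Diff_subset of_nat_diff)
  also have "(\<Sum>i\<in>S. fitness r S i * E i) = (\<Sum>i\<in>S. if i = 0 then r * E 0 else 0) + (\<Sum>i\<in>S. if i \<noteq> 0 then r * E i else 0)"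
    by (subst sum.distrib[symmetric]) (auto intro!: sum.cong simp: fitness_def)
  also have "(\<Sum>i\<in>S. if i = 0 then r * E 0 else 0) = (if 0 \<in> S then r * E0v else 0)"
  proof -
    have "0 \<in> S \<Longrightarrow> E 0 = E0v"
    proof -
      assume c: "0 \<in> S"
      have "E 0 = (\<Sum>j<n. star_W n 0 j * ph \<Phi> (insert j S))"
        unfolding E_def using c by (intro sum.cong refl) (auto simp: moran_update_def)
      also have "\<dots> = E0v" unfolding E0v_def k_def by (rule E0[OF S c])
      finally show ?thesis .
    qed
    then show ?thesis using fS by (simp add: sum.delta)
  qed
  also have "(\<Sum>i\<in>S. if i \<noteq> 0 then r * E i else 0) = (\<Sum>i\<in>S-{0}. r * \<Phi> True k)"
  proof -
    have "(\<Sum>i\<in>S. if i \<noteq> 0 then r * E i else 0) = (\<Sum>i\<in>{i\<in>S. i \<noteq> 0}. r * E i)"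
      using fS by (rule sum.inter_filter[symmetric])
    also have "{i\<in>S. i \<noteq> 0} = S - {0}" by auto
    also have "(\<Sum>i\<in>S-{0}. r * E i) = (\<Sum>i\<in>S-{0}. r * \<Phi> True k)"
    proof (intro sum.cong refl)
      fix i assume i: "i \<in> S - {0}"
      have "E i = (\<Sum>j<n. star_W n i j * ph \<Phi> (insert j S))"
        unfolding E_def using i by (intro sum.cong refl) (auto simp: moran_update_def)
      also have "\<dots> = \<Phi> True k" unfolding k_def using i n by (intro Eleaf) auto
      finally show "r * E i = r * \<Phi> True k" by simp
    qed
    finally show ?thesis .
  qed
  also have "(\<Sum>i\<in>S-{0}. r * \<Phi> True k) = r * real k * \<Phi> True k" unfolding k_def by simp
  finally show ?thesis .
qed



primrec gg :: "real \<Rightarrow> real \<Rightarrow> nat \<Rightarrow> real" where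
  "gg r d 0 = d"
| "gg r d (Suc k) = gg r d k + fact k * d / r ^ Suc k"

definition PhiS :: "real \<Rightarrow> real \<Rightarrow> bool \<Rightarrow> nat \<Rightarrow> real" where
  "PhiS r d c k = (if k = 0 then (if c then d else 0) else if k = 1 \<and> \<not> c then d else gg r d k)"

lemma gg_mono_Suc: "r > 0 \<Longrightarrow> d > 0 \<Longrightarrow> gg r d k \<le> gg r d (Suc k)"
  by simp

lemma gg_mono: "r > 0 \<Longrightarrow> d > 0 \<Longrightarrow> j \<le> k \<Longrightarrow> gg r d j \<le> gg r d k"
  by (induction k) (auto simp: le_Suc_eq intro: order_trans)

lemma gg_ge: "r > 0 \<Longrightarrow> d > 0 \<Longrightarrow> d \<le> gg r d k"
  using gg_mono[of r d 0 k] by simp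

lemma PhiS_le_gg: "r > 0 \<Longrightarrow> d > 0 \<Longrightarrow> PhiS r d c j \<le> gg r d (Suc j)"
  unfolding PhiS_def using gg_ge[of r d "Suc j"] gg_mono[of r d j "Suc j"] by auto

lemma Qtrue:
  assumes r: "r > 0" and d: "d > 0"
  shows "r * (PhiS r d True (Suc k) - PhiS r d True k) + PhiS r d False k
     + real k * PhiS r d True (k - 1) - (real k + 1) * PhiS r d True k \<le> 0"
proof (cases k)
  case 0 then show ?thesis using r by (simp add: PhiS_def)
next
  case (Suc j)
  show ?thesis
  proof (cases j)
    case 0 then show ?thesis using Suc r d by (simp add: PhiS_def field_simps power2_eq_square)
  next
    case (Suc i)
    define X where "X = gg r d (Suc i)"
    define B where "B = fact (Suc i) * d / r ^ Suc (Suc i)"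
    define C where "C = fact (Suc (Suc i)) * d / r ^ Suc (Suc (Suc i))"
    have kk: "k = Suc (Suc i)" using \<open>k = Suc j\<close> Suc by simp
    have g1: "gg r d k = X + B" unfolding kk X_def B_def by simp
    have g2: "gg r d (Suc k) = X + B + C" unfolding kk X_def B_def C_def by simp
    have rc: "r * C = real k * B" unfolding C_def B_def kk using r
      by (simp add: field_simps)
    have "PhiS r d True (Suc k) = X + B + C" "PhiS r d True k = X + B" "PhiS r d False k = X + B"
      "PhiS r d True (k - 1) = X" using g1 g2 unfolding PhiS_def X_def by (auto simp: kk)
    then have "r * (PhiS r d True (Suc k) - PhiS r d True k) + PhiS r d False k
     + real k * PhiS r d True (k - 1) - (real k + 1) * PhiS r d True k = r * C - real k * B"
      by (simp add: algebra_simps)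
    then show ?thesis using rc by simp
  qed
qed

lemma Qfalse:
  assumes r: "r > 0" and d: "d > 0" and a: "a \<ge> 0" and m: "m > 0" and am: "k = 1 \<Longrightarrow> a = m"
  shows "r * real k * (PhiS r d True k - PhiS r d False k) + a * real k / m * (PhiS r d False (k - 1) - PhiS r d False k) \<le> 0"
proof (cases k)
  case 0 then show ?thesis by simp
next
  case (Suc j)
  show ?thesis
  proof (cases j)
    case 0 then show ?thesis using Suc r d am m by (simp add: PhiS_def field_simps)
  next
    case (Suc i)
    have "PhiS r d False (k - 1) \<le> PhiS r d False k"
      using PhiS_le_gg[OF r d, of False "Suc i"] \<open>k = Suc j\<close> Suc by (simp add: PhiS_def)
    then have "a * real k / m * (PhiS r d False (k - 1) - PhiS r d False k) \<le> 0"
      using a m by (intro mult_nonneg_nonpos) auto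
    then show ?thesis using \<open>k = Suc j\<close> Suc by (simp add: PhiS_def)
  qed
qed


lemma algT:
  fixes N K k r A B C D :: real
  assumes "N - 1 \<noteq> 0" "K = k + 1"
  shows "r * ((k * A + (N - 1 - k) * B) / (N - 1)) + r * k * A + (N - K) * ((C + k * D + (N - K - 1) * A) / (N - 1))
    - (r * K + (N - K)) * A
    = (N - 1 - k) / (N - 1) * (r * (B - A) + C + k * D - (k + 1) * A)"
proof -
  define m where "m = N - 1"
  have N: "N = m + 1" unfolding m_def by simp
  have m: "m \<noteq> 0" using assms unfolding m_def by simp
  show ?thesis unfolding N assms(2) using m
    apply (simp add: divide_simps)
    apply (simp add: algebra_simps)
    done
qed
lemma algF:
  fixes N K k r A C D :: real
  assumes "N - 1 \<noteq> 0" "K = k"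
  shows "0 + r * k * A + (N - K) * ((0 + k * D + (N - K - 1) * C) / (N - 1)) - (r * K + (N - K)) * C
    = r * k * (A - C) + (N - k) * k / (N - 1) * (D - C)"
proof -
  define m where "m = N - 1"
  have N: "N = m + 1" unfolding m_def by simp
  have m: "m \<noteq> 0" using assms unfolding m_def by simp
  show ?thesis unfolding N assms(2) using m
    apply (simp add: divide_simps)
    apply (simp add: algebra_simps)
    done
qed


lemma F_eq:
  assumes S: "S \<subseteq> {..<n}"
  shows "(\<Sum>k<n. fitness r S k) = r * real (card S) + (real n - real (card S))"
proof -
  have fS: "finite S" using S finite_subset by blast
  have "(\<Sum>k<n. fitness r S k) = (\<Sum>k\<in>S. fitness r S k) + (\<Sum>k\<in>{..<n}-S. fitness r S k)"
    using S by (simp add: sum.subset_diff)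
  also have "(\<Sum>k\<in>S. fitness r S k) = (\<Sum>k\<in>S. r)" by (intro sum.cong) (auto simp: fitness_def)
  also have "(\<Sum>k\<in>{..<n}-S. fitness r S k) = (\<Sum>k\<in>{..<n}-S. 1)" by (intro sum.cong) (auto simp: fitness_def)
  finally show ?thesis using S fS card_mono[OF _ S] by (simp add: card_Diff_subset of_nat_diff)
qed

lemma super:
  assumes S: "S \<subseteq> {..<n}" and n: "n \<ge> 3" and r: "r > 0" and d: "d > 0"
  shows "(\<Sum>U\<in>Pow {..<n}. moran_step n r (clique_W n) (star_W n) S U * ph (PhiS r d) U) \<le> ph (PhiS r d) S"
proof -
  let ?P = "PhiS r d"
  define k where "k = card (S - {0})"
  have fS: "finite S" using S finite_subset by blast
  have cS: "card S \<le> n" using card_mono[OF _ S] by simp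
  define m where "m = real n - 1"
  have m: "m > 0" using n unfolding m_def by simp
  define F where "F = r * real (card S) + (real n - real (card S))"
  have F: "F > 0"
  proof -
    have "r * real (card S) \<ge> 0" using r by simp
    moreover have "real n - real (card S) \<ge> 0" using cS by simp
    moreover have "r * real (card S) > 0 \<or> real n - real (card S) > 0"
      using r n by (cases "card S = 0") auto
    ultimately show ?thesis unfolding F_def by linarith
  qed
  define ER where "ER \<equiv> ((if 0 \<in> S then ?P False k else 0) + real k * ?P (0 \<in> S) (k - 1)
      + (real n - real (card S) - 1) * ph ?P S) / (real n - 1)"
  define E0v where "E0v \<equiv> (real k * ?P True k + (real n - 1 - real k) * ?P True (Suc k)) / (real n - 1)"
  have eq: "(\<Sum>U\<in>Pow {..<n}. moran_step n r (clique_W n) (star_W n) S U * ph ?P U) =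
     ((if 0 \<in> S then r * E0v else 0) + r * real k * ?P True k + (real n - real (card S)) * ER) / F"
    unfolding ER_def E0v_def k_def F_def F_eq[OF S, symmetric]
    by (rule drift[OF S]) (use n in simp)
  have key: "(if 0 \<in> S then r * E0v else 0) + r * real k * ?P True k + (real n - real (card S)) * ER \<le> F * ph ?P S"
  proof (cases "0 \<in> S")
    case True
    have cardS: "card S = Suc k" using card_Suc_Diff1[OF fS True] unfolding k_def by simp
    define a where "a = real n - 1 - real k"
    have a: "a \<ge> 0" using cS cardS unfolding a_def by simp
    have phS: "ph ?P S = ?P True k" using True by (simp add: ph_def k_def)
    have "(if 0 \<in> S then r * E0v else 0) + r * real k * ?P True k + (real n - real (card S)) * ER - F * ph ?P S
       = a / m * (r * (?P True (Suc k) - ?P True k) + ?P False k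
     + real k * ?P True (k - 1) - (real k + 1) * ?P True k)"
    proof -
      have tt: "(0 \<in> S) = True" using True by simp
      show ?thesis
        unfolding ER_def E0v_def F_def phS a_def m_def tt if_True
        by (rule algT) (use cardS n in auto)
    qed
    also have "\<dots> \<le> 0" using Qtrue[OF r d, of k] a m by (intro mult_nonneg_nonpos) auto
    finally show ?thesis by simp
  next
    case False
    have cardS: "card S = k" using False unfolding k_def by simp
    define a where "a = real n - real k"
    have a: "a \<ge> 0" using cS cardS unfolding a_def by simp
    have phS: "ph ?P S = ?P False k" using False by (simp add: ph_def k_def)
    have "(if 0 \<in> S then r * E0v else 0) + r * real k * ?P True k + (real n - real (card S)) * ER - F * ph ?P S
       = r * real k * (?P True k - ?P False k) + a * real k / m * (?P False (k - 1) - ?P False k)"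
    proof -
      have ff: "(0 \<in> S) = False" using False by simp
      show ?thesis
        unfolding ER_def E0v_def F_def phS a_def m_def ff if_False
        by (rule algF) (use cardS n in auto)
    qed
    also have "\<dots> \<le> 0" using Qfalse[OF r d a m, of k] unfolding a_def m_def by auto
    finally show ?thesis by simp
  qed
  show ?thesis unfolding eq using key F by (simp add: pos_divide_le_eq mult.commute)
qed



lemma step_nonneg:
  assumes r: "r > 0" and n: "n \<ge> 1"
  shows "moran_step n r (clique_W n) (star_W n) S U \<ge> 0"
proof -
  have fp: "fitness r S i > 0" for i using r by (simp add: fitness_def)
  have "0 \<in> {..<n}" using n by simp
  then have "{..<n} \<noteq> {}" by blast
  then have F: "(\<Sum>k<n. fitness r S k) > 0" using fp by (intro sum_pos) auto
  have W: "clique_W n i j \<ge> 0" "star_W n i j \<ge> 0" for i j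
    using n by (auto simp: clique_W_def star_W_def)
  show ?thesis unfolding moran_step_def
    using fp F W by (intro sum_nonneg mult_nonneg_nonneg) (auto intro: less_imp_le)
qed

lemma tprob_le:
  assumes nn: "\<And>S U. moran_step n r WR WM S U \<ge> 0"
  and sup: "\<And>S. S \<subseteq> {..<n} \<Longrightarrow> (\<Sum>U\<in>Pow {..<n}. moran_step n r WR WM S U * \<phi> U) \<le> \<phi> S"
  and pos: "\<And>S. S \<subseteq> {..<n} \<Longrightarrow> \<phi> S \<ge> 0" and top: "\<phi> {..<n} \<ge> 1"
  shows "S \<subseteq> {..<n} \<Longrightarrow> moran_tprob n r WR WM t S {..<n} \<le> \<phi> S"
proof (induction t arbitrary: S)
  case 0 then show ?case using pos top by auto
next
  case (Suc t)
  have "moran_tprob n r WR WM (Suc t) S {..<n} = (\<Sum>U\<in>Pow {..<n}. moran_step n r WR WM S U * moran_tprob n r WR WM t U {..<n})"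
    by simp
  also have "\<dots> \<le> (\<Sum>U\<in>Pow {..<n}. moran_step n r WR WM S U * \<phi> U)"
    using Suc.IH nn by (intro sum_mono mult_left_mono) auto
  also have "\<dots> \<le> \<phi> S" using sup Suc.prems by blast
  finally show ?case .
qed

lemma tprob_nonneg:
  assumes nn: "\<And>S U. moran_step n r WR WM S U \<ge> 0"
  shows "moran_tprob n r WR WM t S T \<ge> 0"
  by (induction t arbitrary: S) (auto intro!: sum_nonneg mult_nonneg_nonneg nn)

lemma hn1: "C = 1 + K \<Longrightarrow> r * 1 + r * K * 1 + (N - C) * 1 = r * C + (N - (C::real))"
  by (simp add: algebra_simps)
lemma hn2: "C = 0 + K \<Longrightarrow> 0 + r * K * 1 + (N - C) * 1 = r * C + (N - (C::real))"
  by (simp add: algebra_simps)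

lemma rowsum:
  assumes S: "S \<subseteq> {..<n}" and n: "n \<ge> 3" and r: "r > 0"
  shows "(\<Sum>U\<in>Pow {..<n}. moran_step n r (clique_W n) (star_W n) S U * ph (\<lambda>_ _. 1) U) = 1"
proof -
  have fS: "finite S" using S finite_subset by blast
  have cS: "card S \<le> n" using card_mono[OF _ S] by simp
  have F: "(\<Sum>k<n. fitness r S k) = r * real (card S) + (real n - real (card S))" by (rule F_eq[OF S])
  have Fp: "r * real (card S) + (real n - real (card S)) > 0"
  proof -
    have "r * real (card S) \<ge> 0" using r by simp
    moreover have "real n - real (card S) \<ge> 0" using cS by simp
    moreover have "r * real (card S) > 0 \<or> real n - real (card S) > 0"
      using r n by (cases "card S = 0") auto
    ultimately show ?thesis by linarith
  qed
  have m: "real n - 1 > 0" using n by simp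
  let ?k = "card (S - {0})"
  have cardS: "real (card S) = (if 0 \<in> S then 1 else 0) + real ?k"
  proof (cases "0 \<in> S")
    case True
    have "card S = Suc ?k" using card_Suc_Diff1[OF fS True] by simp
    then show ?thesis using True by simp
  qed simp
  have "(\<Sum>U\<in>Pow {..<n}. moran_step n r (clique_W n) (star_W n) S U * ph (\<lambda>_ _. 1) U) =
     ((if 0 \<in> S then r * ((real ?k * 1 + (real n - 1 - real ?k) * 1) / (real n - 1)) else 0) + r * real ?k * 1
       + (real n - real (card S)) * (((if 0 \<in> S then 1 else 0) + real ?k * 1 + (real n - real (card S) - 1) * ph (\<lambda>_ _. 1) S) / (real n - 1)))
      / (\<Sum>k<n. fitness r S k)"
    by (rule drift[OF S]) (use n in simp)
  also have "\<dots> = 1"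
  proof -
    have p1: "ph (\<lambda>_ _. 1) S = 1" by (simp add: ph_def)
    have e1: "(real ?k * 1 + (real n - 1 - real ?k) * 1) / (real n - 1) = 1" using m by simp
    have e2: "((if 0 \<in> S then 1 else 0) + real ?k * 1 + (real n - real (card S) - 1) * ph (\<lambda>_ _. 1) S) / (real n - 1) = 1"
      unfolding p1 using m cardS by simp
    have num: "(if 0 \<in> S then r * 1 else 0) + r * real ?k * 1 + (real n - real (card S)) * 1
       = r * real (card S) + (real n - real (card S))"
    proof (cases "0 \<in> S")
      case True
      have "real (card S) = 1 + real ?k" using cardS unfolding if_P[OF True] .
      then show ?thesis unfolding if_P[OF True] by (rule hn1)
    next
      case False
      have "real (card S) = 0 + real ?k" using cardS unfolding if_not_P[OF False] .
      then show ?thesis unfolding if_not_P[OF False] by (rule hn2)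
    qed
    show ?thesis unfolding e1 e2 F num using Fp by simp
  qed
  finally show ?thesis .
qed



lemma delta_sum: fixes n :: nat shows "(\<Sum>U\<in>Pow {..<n}. f U * (if U = T then 1 else 0)) = (if T \<in> Pow {..<n} then f T else (0::real))"
proof -
  have "(\<Sum>U\<in>Pow {..<n}. f U * (if U = T then 1 else 0)) = (\<Sum>U\<in>Pow {..<n}. if U = T then f T else 0)"
    by (intro sum.cong) auto
  also have "\<dots> = (if T \<in> Pow {..<n} then f T else 0)" by (rule sum.delta) simp
  finally show ?thesis .
qed

lemma stepVV:
  assumes n: "n \<ge> 3" and r: "r > 0"
  shows "moran_step n r (clique_W n) (star_W n) {..<n} {..<n} = 1"
proof -
  let ?V = "{..<n} :: nat set"
  let ?st = "moran_step n r (clique_W n) (star_W n) ?V"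
  have "?st ?V = (\<Sum>U\<in>Pow {..<n}. ?st U * (if U = ?V then 1 else 0))"
    by (simp add: delta_sum)
  also have "\<dots> = (\<Sum>i<n. \<Sum>j<n. (fitness r ?V i / (\<Sum>k<n. fitness r ?V k)) * (if i\<in>?V then star_W n i j else clique_W n i j) * (if moran_update ?V i j = ?V then 1 else 0))"
    by (rule step_exchange) simp
  also have "\<dots> = (\<Sum>i<n. \<Sum>j<n. (fitness r ?V i / (\<Sum>k<n. fitness r ?V k)) * (if i\<in>?V then star_W n i j else clique_W n i j) * ph (\<lambda>_ _. 1) (moran_update ?V i j))"
    by (intro sum.cong refl) (auto simp: moran_update_def ph_def insert_absorb)
  also have "\<dots> = (\<Sum>U\<in>Pow {..<n}. ?st U * ph (\<lambda>_ _. 1) U)"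
    by (rule step_exchange[symmetric]) simp
  also have "\<dots> = 1" by (rule rowsum) (use n r in auto)
  finally show ?thesis .
qed

lemma tprob_mono:
  assumes n: "n \<ge> 3" and r: "r > 0"
  shows "S \<subseteq> {..<n} \<Longrightarrow> moran_tprob n r (clique_W n) (star_W n) t S {..<n} \<le> moran_tprob n r (clique_W n) (star_W n) (Suc t) S {..<n}"
proof (induction t arbitrary: S)
  case 0
  have "moran_tprob n r (clique_W n) (star_W n) (Suc 0) S {..<n} = moran_step n r (clique_W n) (star_W n) S {..<n}"
    by (simp add: delta_sum)
  then show ?case using stepVV[OF n r] step_nonneg[OF r, of n S "{..<n}"] n by auto
next
  case (Suc t)
  have "moran_tprob n r (clique_W n) (star_W n) (Suc t) S {..<n} = (\<Sum>U\<in>Pow {..<n}. moran_step n r (clique_W n) (star_W n) S U * moran_tprob n r (clique_W n) (star_W n) t U {..<n})"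
    by simp
  also have "\<dots> \<le> (\<Sum>U\<in>Pow {..<n}. moran_step n r (clique_W n) (star_W n) S U * moran_tprob n r (clique_W n) (star_W n) (Suc t) U {..<n})"
    using Suc.IH step_nonneg[OF r] n by (intro sum_mono mult_left_mono) auto
  also have "\<dots> = moran_tprob n r (clique_W n) (star_W n) (Suc (Suc t)) S {..<n}" by simp
  finally show ?case .
qed

lemma fix_le:
  assumes n: "n \<ge> 3" and r: "r > 0" and S: "S \<subseteq> {..<n}"
  and sup: "\<And>S. S \<subseteq> {..<n} \<Longrightarrow> (\<Sum>U\<in>Pow {..<n}. moran_step n r (clique_W n) (star_W n) S U * \<phi> U) \<le> \<phi> S"
  and pos: "\<And>S. S \<subseteq> {..<n} \<Longrightarrow> \<phi> S \<ge> 0" and top: "\<phi> {..<n} \<ge> 1"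
  shows "fixation_from n r (clique_W n) (star_W n) S \<le> \<phi> S"
proof -
  let ?X = "\<lambda>t. moran_tprob n r (clique_W n) (star_W n) t S {..<n}"
  have nn: "moran_step n r (clique_W n) (star_W n) A B \<ge> 0" for A B using step_nonneg[OF r] n by simp
  have le1: "?X t \<le> ph (\<lambda>_ _. 1) S" for t
    by (rule tprob_le[OF nn _ _ _ S]) (use rowsum n r in \<open>auto simp: ph_def\<close>)
  have lephi: "?X t \<le> \<phi> S" for t
    by (rule tprob_le[OF nn sup pos top S])
  have inc: "incseq ?X" by (rule incseq_SucI) (rule tprob_mono[OF n r S])
  have bdd: "bdd_above (range ?X)" using le1 by (intro bdd_aboveI2) auto
  have "?X \<longlonglongrightarrow> (SUP t. ?X t)" by (rule LIMSEQ_incseq_SUP[OF bdd inc])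
  then have "fixation_from n r (clique_W n) (star_W n) S = (SUP t. ?X t)"
    unfolding fixation_from_def by (rule limI)
  also have "\<dots> \<le> \<phi> S" by (rule cSUP_least) (use lephi in auto)
  finally show ?thesis .
qed

theorem theorem4:
  fixes n :: nat and r :: real
  assumes "n \<ge> 3" and "r > 0"
  shows "fixation_prob n r (clique_W n) (star_W n) \<le> r ^ (n - 1) / fact (n - 2)"
proof -
  have n: "n \<ge> 3" and r: "r > 0" using assms by auto
  define d where "d = r ^ (n - 1) / fact (n - 2)"
  have d: "d > 0" unfolding d_def using r by simp
  let ?\<phi> = "ph (PhiS r d)"
  have pos: "?\<phi> S \<ge> 0" for S
  proof -
    have "PhiS r d c k \<ge> 0" for c k
      unfolding PhiS_def using gg_ge[OF r d, of k] d by auto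
    then show ?thesis unfolding ph_def .
  qed
  have top: "?\<phi> {..<n} \<ge> 1"
  proof -
    have c: "card ({..<n} - {0}) = Suc (n - 2)" using n by simp
    have "?\<phi> {..<n} = gg r d (Suc (n - 2))" unfolding ph_def c PhiS_def using n by simp
    also have "\<dots> = gg r d (n - 2) + 1"
    proof -
      have e: "Suc (n - 2) = n - 1" using n by simp
      have rp: "r ^ (n - 1) > 0" using r by simp
      have fp: "fact (n - 2) > (0::real)" by simp
      have "fact (n - 2) * d / r ^ Suc (n - 2) = 1" unfolding d_def e using rp fp r by simp
      then show ?thesis by (simp only: gg.simps)
    qed
    finally show ?thesis using gg_ge[OF r d, of "n - 2"] d by simp
  qed
  have each: "fixation_from n r (clique_W n) (star_W n) {v} \<le> d" if v: "v < n" for v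
  proof -
    have "fixation_from n r (clique_W n) (star_W n) {v} \<le> ?\<phi> {v}"
      by (rule fix_le[OF n r _ super[OF _ n r d] pos top]) (use v in auto)
    also have "?\<phi> {v} = d"
    proof (cases "v = 0")
      case True
      then show ?thesis by (simp add: ph_def PhiS_def)
    next
      case False
      then have "{v} - {0} = {v}" "0 \<notin> {v}" by auto
      then show ?thesis unfolding ph_def PhiS_def by simp
    qed
    finally show ?thesis .
  qed
  have "(\<Sum>v<n. fixation_from n r (clique_W n) (star_W n) {v}) \<le> (\<Sum>v<n. d)"
    by (intro sum_mono each) auto
  then have "fixation_prob n r (clique_W n) (star_W n) \<le> real n * d / real n"
    unfolding fixation_prob_def by (intro divide_right_mono) auto
  also have "\<dots> = d" using n by simp
  finally show ?thesis unfolding d_def .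
qed


end
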